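(* Let $m$ be a tour with core $K$. If $\theta_1\in\mathbb{S}^1$ and $z\in\partial K\cap D(\theta_1)$, then $z=m(\theta_1)$.
   Context: Write $\mathbb{S}^1=\mathbb{R}/2\pi\mathbb{Z}$, $u(\theta)=(\cos\theta,\sin\theta)$ and $u^\perp(\theta)=(-\sin\theta,\cos\theta)$. A ruled function $R:\mathbb{S}^1\to\mathbb{R}$ is one having a left limit $R_l(\theta)$ and a right limit $R_r(\theta)$ at every point. A tour is a continuous map $m:\mathbb{S}^1\to\mathbb{R}^2$ such that: - $m$ has left and right derivatives at every point; - there is a ruled function $R$ with $m'_l(\theta)=R_l(\theta)u(\theta)$ and $m'_r(\theta)=R_r(\theta)u(\theta)$. For each $\theta$, $D(\theta)=m(\theta)+\mathbb{R}u(\theta)$ is the line oriented by $u(\theta)$, and $D^+(\theta)=\{x:\langle x-m(\theta),u^\perp(\theta)\rangle\ge0\}$ is its closed left half-plane. The core of the tour is $K=\bigcap_{\theta}D^+(\theta)$. *)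

theory Defs
  imports "HOL-Analysis.Analysis"
begin

text \<open>S^1 = R / 2 pi Z is modelled by 2 pi-periodic functions on the reals.\<close>

definition u :: "real \<Rightarrow> real \<times> real" where
  "u \<theta> = (cos \<theta>, sin \<theta>)"

definition uperp :: "real \<Rightarrow> real \<times> real" where
  "uperp \<theta> = (- sin \<theta>, cos \<theta>)"

definition ruled :: "(real \<Rightarrow> real) \<Rightarrow> bool" where
  "ruled R \<longleftrightarrow> (\<forall>\<theta>. R (\<theta> + 2 * pi) = R \<theta>) \<and>
     (\<forall>\<theta>. (\<exists>l. (R \<longlongrightarrow> l) (at_left \<theta>)) \<and> (\<exists>r. (R \<longlongrightarrow> r) (at_right \<theta>)))"

definition tour :: "(real \<Rightarrow> real \<times> real) \<Rightarrow> bool" where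
  "tour m \<longleftrightarrow> (\<forall>\<theta>. m (\<theta> + 2 * pi) = m \<theta>) \<and> continuous_on UNIV m \<and>
     (\<exists>R. ruled R \<and>
        (\<forall>\<theta>. (m has_vector_derivative (Lim (at_left \<theta>) R *\<^sub>R u \<theta>)) (at_left \<theta>) \<and>
              (m has_vector_derivative (Lim (at_right \<theta>) R *\<^sub>R u \<theta>)) (at_right \<theta>)))"

definition Dline :: "(real \<Rightarrow> real \<times> real) \<Rightarrow> real \<Rightarrow> (real \<times> real) set" where
  "Dline m \<theta> = {m \<theta> + t *\<^sub>R u \<theta> | t. True}"

definition Dplus :: "(real \<Rightarrow> real \<times> real) \<Rightarrow> real \<Rightarrow> (real \<times> real) set" where
  "Dplus m \<theta> = {x. inner (x - m \<theta>) (uperp \<theta>) \<ge> 0}"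

definition core :: "(real \<Rightarrow> real \<times> real) \<Rightarrow> (real \<times> real) set" where
  "core m = (\<Inter>\<theta>. Dplus m \<theta>)"

end

theory Submission imports Defs begin
lemma uperp_deriv: "(uperp has_vector_derivative (- u x)) (at x within S)"
  unfolding uperp_def u_def
  by (auto intro!: derivative_eq_intros simp: has_real_derivative_iff_has_vector_derivative[symmetric])

lemma key:
  assumes m: "(m has_vector_derivative v) (at x within S)"
    and v: "inner v (uperp x) = 0"
  shows "((\<lambda>y. inner (z - m y) (uperp y)) has_real_derivative (- inner (z - m x) (u x))) (at x within S)"
proof -
  have d1: "((\<lambda>y. z - m y) has_derivative (\<lambda>h. - (h *\<^sub>R v))) (at x within S)"
    using m unfolding has_vector_derivative_def by (auto intro!: derivative_eq_intros)
  have d2: "(uperp has_derivative (\<lambda>h. h *\<^sub>R (- u x))) (at x within S)"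
    using uperp_deriv unfolding has_vector_derivative_def by blast
  have "((\<lambda>y. inner (z - m y) (uperp y)) has_derivative
     (\<lambda>h. inner (z - m x) (h *\<^sub>R (- u x)) + inner (- (h *\<^sub>R v)) (uperp x))) (at x within S)"
    by (rule has_derivative_inner[OF d1 d2])
  moreover have "(\<lambda>h. inner (z - m x) (h *\<^sub>R (- u x)) + inner (- (h *\<^sub>R v)) (uperp x)) = (*) (- inner (z - m x) (u x))"
    using v by (auto simp: fun_eq_iff inner_minus_right inner_minus_left algebra_simps)
  ultimately show ?thesis unfolding has_field_derivative_def by metis
qed

lemma u_uperp: "inner (u x) (uperp x) = 0" "inner (u x) (u x) = 1"
  by (auto simp: u_def uperp_def inner_Pair)

lemma closed_core: "closed (core m)"
  unfolding core_def Dplus_def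
  by (intro closed_INT ballI closed_Collect_le continuous_on_inner continuous_on_diff continuous_on_const continuous_on_id)

lemma eventually_at_left_less': "\<forall>\<^sub>F y in at_left (x::real). y < x"
  unfolding eventually_at_filter by simp

theorem mainTheorem3:
  fixes m :: "real \<Rightarrow> real \<times> real" and \<theta>1 :: real and z :: "real \<times> real"
  assumes "tour m"
    and "z \<in> frontier (core m)"
    and "z \<in> Dline m \<theta>1"
  shows "z = m \<theta>1"
proof -
  obtain R where R: "\<And>\<theta>. (m has_vector_derivative (Lim (at_left \<theta>) R *\<^sub>R u \<theta>)) (at_left \<theta>)"
     "\<And>\<theta>. (m has_vector_derivative (Lim (at_right \<theta>) R *\<^sub>R u \<theta>)) (at_right \<theta>)"
    using assms(1) unfolding tour_def by blast
  obtain t where t: "z = m \<theta>1 + t *\<^sub>R u \<theta>1" using assms(3) unfolding Dline_def by blast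
  have zK: "z \<in> core m" using assms(2) frontier_subset_closed[OF closed_core] by blast
  define f where "f y = inner (z - m y) (uperp y)" for y
  have fpos: "f y \<ge> 0" for y using zK unfolding core_def Dplus_def f_def by blast
  have f0: "f \<theta>1 = 0" unfolding f_def t by (simp add: u_uperp)
  have zu: "inner (z - m \<theta>1) (u \<theta>1) = t" unfolding t by (simp add: u_uperp)
  have par: "inner (c *\<^sub>R u \<theta>1) (uperp \<theta>1) = 0" for c by (simp add: u_uperp)
  have dl: "(f has_real_derivative - t) (at_left \<theta>1)"
    using key[OF R(1) par, of z] unfolding f_def zu .
  have dr: "(f has_real_derivative - t) (at_right \<theta>1)"
    using key[OF R(2) par, of z] unfolding f_def zu .
  show ?thesis
  proof (cases "t = 0")
    case True then show ?thesis using t by simp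
  next
    case False
    show ?thesis
    proof (cases "t > 0")
      case True
      have lim: "((\<lambda>y. (f y - f \<theta>1) / (y - \<theta>1)) \<longlongrightarrow> - t) (at_right \<theta>1)"
        using dr by (simp add: has_field_derivative_iff)
      have "eventually (\<lambda>y. (f y - f \<theta>1) / (y - \<theta>1) < 0 \<and> y > \<theta>1) (at_right \<theta>1)"
        using True by (intro eventually_conj order_tendstoD(2)[OF lim] eventually_at_right_less) auto
      then obtain y where "(f y - f \<theta>1) / (y - \<theta>1) < 0" "y > \<theta>1"
        using eventually_happens[of _ "at_right \<theta>1"] by auto
      then have "f y < 0" using f0 by (simp add: divide_less_0_iff)
      with fpos[of y] show ?thesis by simp
    next
      case False
      with \<open>t \<noteq> 0\<close> have tn: "t < 0" by simp
      have lim: "((\<lambda>y. (f y - f \<theta>1) / (y - \<theta>1)) \<longlongrightarrow> - t) (at_left \<theta>1)"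
        using dl by (simp add: has_field_derivative_iff)
      have "eventually (\<lambda>y. (f y - f \<theta>1) / (y - \<theta>1) > 0 \<and> y < \<theta>1) (at_left \<theta>1)"
        using tn by (intro eventually_conj order_tendstoD(1)[OF lim] eventually_at_left_less') auto
      then obtain y where "(f y - f \<theta>1) / (y - \<theta>1) > 0" "y < \<theta>1"
        using eventually_happens[of _ "at_left \<theta>1"] by auto
      then have "f y < 0" using f0 by (simp add: zero_less_divide_iff)
      with fpos[of y] show ?thesis by simp
    qed
  qed
qed

end
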